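(* For every cycle structure $x$ of an element of $S_\infty$ there exists $b\in\mathbb{N}$ such that every metacyclic subgroup $D\le S_\infty$ (finite) contains at most $b$ elements with cycle structure $x$.
   Context: $S_\infty$ is the group of permutations of $\mathbb{N}$ fixing all but finitely many elements; the cycle structure of a permutation is the non-increasing sequence of lengths of its disjoint cycles. A group is metacyclic if it has a cyclic normal subgroup with cyclic quotient. *)

theory Defs
  imports "HOL-Algebra.Algebra" "HOL-Library.Multiset"
begin

definition finitary_perm :: "(nat \<Rightarrow> nat) \<Rightarrow> bool" where
  "finitary_perm p \<longleftrightarrow> bij p \<and> finite {n. p n \<noteq> n}"

definition S_inf :: "(nat \<Rightarrow> nat) monoid" where
  "S_inf = (BijGroup (UNIV :: nat set)) \<lparr>carrier := {p. finitary_perm p}\<rparr>"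

definition perm_orbit :: "(nat \<Rightarrow> nat) \<Rightarrow> nat \<Rightarrow> nat set" where
  "perm_orbit p x = {(p ^^ k) x | k. True}"

text \<open>Cycle structure: non-increasing list of the lengths of the nontrivial
  disjoint cycles (fixed points omitted, since there are infinitely many).\<close>
definition cycle_structure :: "(nat \<Rightarrow> nat) \<Rightarrow> nat list" where
  "cycle_structure p =
     rev (sorted_list_of_multiset
       (image_mset card (mset_set {perm_orbit p x | x. p x \<noteq> x})))"

definition metacyclic :: "('a, 'b) monoid_scheme \<Rightarrow> bool" where
  "metacyclic G \<longleftrightarrow> (\<exists>N. N \<lhd> G \<and> cyclic_group (subgroup_generated G N)
                          \<and> cyclic_group (G Mod N))"

end

theory Submission
  imports Defs
begin


definition supp :: "(nat \<Rightarrow> nat) \<Rightarrow> nat set" where "supp p = {x. p x \<noteq> x}"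

lemma Bij_UNIV: "Bij (UNIV::nat set) = {f. bij f}"
  by (auto simp: Bij_def)

lemma compose_UNIV: "compose UNIV f g = f \<circ> g"
  by (auto simp: compose_def)

lemma finitary_comp: "finitary_perm f \<Longrightarrow> finitary_perm g \<Longrightarrow> finitary_perm (f \<circ> g)"
  unfolding finitary_perm_def
  apply (auto intro: bij_comp)
  apply (rule finite_subset[of _ "{x. g x \<noteq> x} \<union> {x. f x \<noteq> x}"])
  by auto

lemma finitary_inv: "finitary_perm f \<Longrightarrow> finitary_perm (inv_into UNIV f)"
  unfolding finitary_perm_def
  apply (auto intro: bij_imp_bij_inv)
  apply (erule finite_subset[rotated])
  apply (auto simp: bij_def)
  by (metis inv_f_f)

lemma subgroup_finitary: "subgroup {p. finitary_perm p} (BijGroup UNIV)"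
proof
  show "{p. finitary_perm p} \<subseteq> carrier (BijGroup UNIV)"
    by (auto simp: BijGroup_def Bij_UNIV finitary_perm_def)
  fix x y assume "x \<in> {p. finitary_perm p}" "y \<in> {p. finitary_perm p}"
  then show "x \<otimes>\<^bsub>BijGroup UNIV\<^esub> y \<in> {p. finitary_perm p}"
    using finitary_comp[of x y] by (auto simp: BijGroup_def Bij_UNIV finitary_perm_def compose_UNIV)
next
  show "\<one>\<^bsub>BijGroup UNIV\<^esub> \<in> {p. finitary_perm p}"
    by (auto simp: BijGroup_def finitary_perm_def id_def[symmetric])
next
  fix x assume x: "x \<in> {p. finitary_perm p}"
  then have "x \<in> Bij UNIV" by (auto simp: Bij_UNIV finitary_perm_def)
  then have "inv\<^bsub>BijGroup UNIV\<^esub> x = inv_into UNIV x"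
    by (simp add: inv_BijGroup restrict_def)
  then show "inv\<^bsub>BijGroup UNIV\<^esub> x \<in> {p. finitary_perm p}"
    using finitary_inv x by auto
qed

lemma group_S_inf: "group S_inf"
  unfolding S_inf_def using subgroup.subgroup_is_group[OF subgroup_finitary group_BijGroup] .

lemma carrier_S_inf: "carrier S_inf = {p. finitary_perm p}"
  by (simp add: S_inf_def)

lemma mult_S_inf: "f \<in> carrier S_inf \<Longrightarrow> g \<in> carrier S_inf \<Longrightarrow> f \<otimes>\<^bsub>S_inf\<^esub> g = f \<circ> g"
  by (auto simp: S_inf_def BijGroup_def Bij_UNIV finitary_perm_def compose_UNIV)

lemma one_S_inf: "\<one>\<^bsub>S_inf\<^esub> = id"
  by (auto simp: S_inf_def BijGroup_def id_def)




lemma ph: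
  assumes "inj p" "finite S" "card S \<le> t" "\<forall>j\<le>t. (p^^j) x \<in> S"
  shows "\<exists>d. 0<d \<and> d \<le> t \<and> (p^^d) x = x"
proof -
  have sub: "(\<lambda>j. (p^^j) x) ` {0..t} \<subseteq> S" using assms(4) by auto
  have "\<not> inj_on (\<lambda>j. (p^^j) x) {0..t}"
  proof
    assume "inj_on (\<lambda>j. (p^^j) x) {0..t}"
    then have "card ((\<lambda>j. (p^^j) x) ` {0..t}) = Suc t" by (simp add: card_image)
    moreover have "card ((\<lambda>j. (p^^j) x) ` {0..t}) \<le> card S" using card_mono[OF assms(2) sub] .
    ultimately show False using assms(3) by simp
  qed
  then obtain i j where ij: "i \<le> t" "j \<le> t" "i \<noteq> j" "(p^^i) x = (p^^j) x"
    unfolding inj_on_def by auto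
  have main: "\<exists>d. 0<d \<and> d \<le> t \<and> (p^^d) x = x" if "i < j" "i \<le> t" "j \<le> t" "(p^^i) x = (p^^j) x" for i j
  proof -
    have "(p^^j) x = (p^^i) ((p^^(j-i)) x)"
      using that(1) by (metis add_diff_inverse_nat funpow_add less_imp_not_less o_apply)
    then have "(p^^i) x = (p^^i) ((p^^(j-i)) x)" using that(4) by simp
    then have "(p^^(j-i)) x = x" using inj_fn[OF assms(1), of i] by (metis injD)
    then show ?thesis using that by (intro exI[of _ "j-i"]) auto
  qed
  show ?thesis
  proof (cases "i < j")
    case True then show ?thesis using main ij by blast
  next
    case False then have "j < i" using ij by simp
    then show ?thesis using main ij by metis
  qed
qed

lemma supp_closed: "inj p \<Longrightarrow> x \<in> supp p \<Longrightarrow> (p^^j) x \<in> supp p"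
proof (induction j)
  case 0 then show ?case by simp
next
  case (Suc j)
  then have "p ((p^^j) x) \<noteq> (p^^j) x" by (simp add: supp_def)
  then have "p (p ((p^^j) x)) \<noteq> p ((p^^j) x)" using Suc.prems(1) by (metis injD)
  then show ?case by (simp add: supp_def)
qed

lemma funpow_fix_mult: "(p^^d) x = x \<Longrightarrow> (p^^(d*k)) x = x"
proof (induction k)
  case 0 then show ?case by simp
next
  case (Suc k)
  have "(p^^(d*Suc k)) x = (p^^d) ((p^^(d*k)) x)"
    by (simp add: funpow_add)
  then show ?case using Suc by simp
qed

lemma fix_funpow: "p x = x \<Longrightarrow> (p^^n) x = x"
  by (induction n) auto

lemma order_bound:
  assumes "inj p" "finite (supp p)" "card (supp p) \<le> s"
  shows "p ^^ fact s = id"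
proof
  fix x
  show "(p ^^ fact s) x = id x"
  proof (cases "x \<in> supp p")
    case False then show ?thesis by (simp add: supp_def fix_funpow)
  next
    case True
    then obtain d where d: "0<d" "d \<le> s" "(p^^d) x = x"
      using ph[OF assms(1,2,3), of x] supp_closed[OF assms(1) True] by blast
    then have "d dvd fact s" by (simp add: dvd_fact)
    then obtain k where "fact s = d*k" by (auto simp: dvd_def)
    then show ?thesis using funpow_fix_mult[OF d(3)] by simp
  qed
qed

lemma supp_le_cs:
  assumes "finitary_perm p"
  shows "card (supp p) \<le> sum_list (cycle_structure p)"
proof -
  have inj: "inj p" and fin: "finite (supp p)" using assms by (auto simp: finitary_perm_def supp_def bij_def)
  define Os where "Os = {perm_orbit p x | x. p x \<noteq> x}"
  have Os: "Os = perm_orbit p ` supp p" by (auto simp: Os_def supp_def)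
  have orb: "perm_orbit p x \<subseteq> supp p" if "x \<in> supp p" for x
    using supp_closed[OF inj that] by (auto simp: perm_orbit_def)
  have "supp p \<subseteq> \<Union>Os"
  proof
    fix x assume "x \<in> supp p"
    moreover have "x \<in> perm_orbit p x" by (auto simp: perm_orbit_def intro: exI[of _ 0])
    ultimately show "x \<in> \<Union>Os" using Os by auto
  qed
  moreover have "\<Union>Os \<subseteq> supp p" using orb Os by auto
  ultimately have eq: "\<Union>Os = supp p" by auto
  have finOs: "finite Os" using Os fin by simp
  have "card (supp p) \<le> sum card Os"
    using card_Union_le_sum_card[of Os] finOs eq orb Os fin by (metis finite_subset imageE)
  also have "sum card Os = sum_list (cycle_structure p)"
    unfolding cycle_structure_def Os_def[symmetric] sum_list_rev
    by (simp add: sum_unfold_sum_mset sum_mset_sum_list[symmetric])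
  finally show ?thesis .
qed




definition per :: "(nat \<Rightarrow> nat) \<Rightarrow> nat \<Rightarrow> nat" where
  "per a x = (LEAST d. 0 < d \<and> (a^^d) x = x)"

lemma per_props:
  assumes "\<exists>d>0. (a^^d) x = x"
  shows "0 < per a x" "(a^^per a x) x = x"
  using LeastI_ex[of "\<lambda>d. 0 < d \<and> (a^^d) x = x"] assms unfolding per_def by auto

lemma per_dvd:
  assumes "\<exists>d>0. (a^^d) x = x"
  shows "(a^^k) x = x \<longleftrightarrow> per a x dvd k"
proof
  assume "per a x dvd k"
  then obtain q where "k = per a x * q" by (auto simp: dvd_def)
  then show "(a^^k) x = x" using funpow_fix_mult[OF per_props(2)[OF assms]] by simp
next
  assume k: "(a^^k) x = x"
  define r where "r = k mod per a x"
  define q where "q = k div per a x"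
  have "k = r + per a x * q" by (simp add: r_def q_def)
  then have "(a^^k) x = (a^^r) ((a^^(per a x * q)) x)" by (simp add: funpow_add)
  also have "(a^^(per a x * q)) x = x" using funpow_fix_mult[OF per_props(2)[OF assms]] by simp
  finally have rx: "(a^^r) x = x" using k by simp
  have "r < per a x" using per_props(1)[OF assms] by (simp add: r_def)
  then have "\<not> (0 < r \<and> (a^^r) x = x)" unfolding per_def using not_less_Least by blast
  then have "r = 0" using rx by auto
  then show "per a x dvd k" by (simp add: r_def dvd_eq_mod_eq_0)
qed

lemma funpow_comm: "(a^^k) ((a^^j) x) = (a^^j) ((a^^k) x)"
  by (metis add.commute comp_apply funpow_add)

lemma cyclic_supp_bound:
  assumes inj: "inj a" and fin: "\<forall>x. \<exists>d>0. (a^^d) x = x"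
    and F: "\<forall>n\<in>F. (\<exists>k. n = a^^k) \<and> finite (supp n) \<and> card (supp n) \<le> t"
  shows "card F \<le> (t*t+1)^(t*t)"
proof -
  define P where "P l = {y. per a y = l}" for l
  define Q where "Q l = (if finite (P l) \<and> card (P l) \<le> t then P l else {})" for l
  define U where "U = (\<Union>l\<in>{1..t}. Q l)"
  have finQ: "finite (Q l)" for l by (simp add: Q_def)
  have cardQ: "card (Q l) \<le> t" for l by (simp add: Q_def)
  have finU: "finite U" by (simp add: U_def finQ)
  have "card U \<le> (\<Sum>l\<in>{1..t}. card (Q l))" unfolding U_def by (rule card_UN_le) simp
  also have "\<dots> \<le> t * t" using sum_bounded_above[of "{1..t}" "\<lambda>l. card (Q l)" t] cardQ by simp
  finally have cardU: "card U \<le> t * t" .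
  have suppU: "supp n \<subseteq> U" if n: "n \<in> F" for n
  proof
    fix x assume x: "x \<in> supp n"
    obtain k where k: "n = a^^k" using F n by blast
    have fs: "finite (supp n)" "card (supp n) \<le> t" using F n by auto
    have nk: "\<not> per a x dvd k" using x k per_dvd[OF fin[rule_format]] by (simp add: supp_def)
    have Psub: "P (per a x) \<subseteq> supp n"
      using nk k per_dvd[OF fin[rule_format]] by (auto simp: P_def supp_def)
    have "\<forall>j\<le>t. (a^^j) x \<in> supp n"
    proof (intro allI impI)
      fix j
      have "(a^^k) ((a^^j) x) \<noteq> (a^^j) x"
      proof
        assume "(a^^k) ((a^^j) x) = (a^^j) x"
        then have "(a^^j) ((a^^k) x) = (a^^j) x" by (simp add: funpow_comm)
        then have "(a^^k) x = x" using inj_fn[OF inj, of j] by (metis injD)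
        then show False using x k by (simp add: supp_def)
      qed
      then show "(a^^j) x \<in> supp n" using k by (simp add: supp_def)
    qed
    then obtain d where d: "0<d" "d \<le> t" "(a^^d) x = x" using ph[OF inj fs] by blast
    then have "per a x dvd d" using per_dvd[OF fin[rule_format]] by simp
    then have "per a x \<le> d" using d(1) by (rule dvd_imp_le)
    then have pl: "per a x \<le> t" "1 \<le> per a x" using d(2) per_props(1)[OF fin[rule_format], of x]
      by linarith+
    have "finite (P (per a x))" using Psub fs(1) by (rule finite_subset)
    moreover have "card (P (per a x)) \<le> t" using card_mono[OF fs(1) Psub] fs(2) by linarith
    ultimately have "finite (P (per a x)) \<and> card (P (per a x)) \<le> t" by blast
    then have "Q (per a x) = P (per a x)" by (simp add: Q_def)
    moreover have "x \<in> P (per a x)" by (simp add: P_def)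
    ultimately show "x \<in> U" using pl unfolding U_def by auto
  qed
  have mapsU: "n x \<in> U" if nF: "n \<in> F" and xU: "x \<in> U" for n x
  proof (cases "x \<in> supp n")
    case True
    obtain k where k: "n = a^^k" using F nF by blast
    have "inj (a^^k)" using inj_fn[OF inj] .
    then have "inj n" using k by simp
    then have "(n^^1) x \<in> supp n" using True by (rule supp_closed)
    then have "n x \<in> supp n" by simp
    then show ?thesis using suppU[OF nF] by blast
  next
    case False then have "n x = x" by (simp add: supp_def)
    then show ?thesis using xU by simp
  qed
  have injF: "inj_on (\<lambda>n. restrict n U) F"
  proof
    fix n m assume nm: "n \<in> F" "m \<in> F" "restrict n U = restrict m U"
    show "n = m"
    proof
      fix x show "n x = m x"
      proof (cases "x \<in> U")
        case True
        from nm(3) have "restrict n U x = restrict m U x" by simp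
        with True show ?thesis by simp
      next
        case False then have "x \<notin> supp n" "x \<notin> supp m" using suppU nm by auto
        then show ?thesis by (simp add: supp_def)
      qed
    qed
  qed
  have "(\<lambda>n. restrict n U) ` F \<subseteq> U \<rightarrow>\<^sub>E U" using mapsU by auto
  then have "card F \<le> card (U \<rightarrow>\<^sub>E U)"
    using card_inj_on_le[OF injF] finU by (simp add: finite_PiE)
  also have "card (U \<rightarrow>\<^sub>E U) = card U ^ card U" using finU by (simp add: card_PiE)
  also have "\<dots> \<le> (t*t+1) ^ card U" by (rule power_mono) (use cardU in auto)
  also have "\<dots> \<le> (t*t+1) ^ (t*t)" by (rule power_increasing) (use cardU in auto)
  finally show ?thesis .
qed




lemma (in group) cyclic_count:
  assumes fin: "finite (carrier G)" and cyc: "cyclic_group G" and M: "0 < M"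
  shows "card {y\<in>carrier G. y [^] M = \<one>} \<le> M"
proof -
  obtain c where c: "c \<in> carrier G" "subgroup_generated G {c} = G"
    using cyc unfolding cyclic_group_def by blast
  have "carrier G = generate G {c}"
    using arg_cong[OF c(2), of carrier] c(1) by (simp add: carrier_subgroup_generated)
  also have "\<dots> = {c [^] k | k. k \<in> (UNIV :: nat set)}"
    using generate_pow_on_finite_carrier[OF fin c(1)] .
  finally have car: "carrier G = {c [^] k | k. k \<in> (UNIV :: nat set)}" .
  define r where "r = ord c"
  have r1: "1 \<le> r" using ord_ge_1[OF fin c(1)] by (simp add: r_def)
  have red: "c [^] k = c [^] (k mod r)" for k :: nat
  proof -
    have e1: "c [^] (r * (k div r)) \<otimes> c [^] (k mod r) = c [^] (r * (k div r) + k mod r)"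
      by (rule nat_pow_mult[OF c(1)])
    have e2: "c [^] (r * (k div r)) = \<one>"
      using c(1) by (simp add: nat_pow_pow[symmetric] r_def)
    have "r * (k div r) + k mod r = k" by simp
    then show ?thesis using e1 e2 c(1) by simp
  qed
  define I where "I = {i. i < r \<and> r dvd i * M}"
  have sub: "{y\<in>carrier G. y [^] M = \<one>} \<subseteq> (\<lambda>i. c [^] i) ` I"
  proof
    fix y assume y: "y \<in> {y\<in>carrier G. y [^] M = \<one>}"
    then obtain k :: nat where k: "y = c [^] k" using car by auto
    define i where "i = k mod r"
    have yi: "y = c [^] i" using k red i_def by simp
    have "c [^] (i * M) = \<one>" using y yi c(1) by (simp add: nat_pow_pow)
    then have "r dvd i * M" using pow_eq_id[OF c(1)] by (simp add: r_def)
    moreover have "i < r" using r1 by (simp add: i_def)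
    ultimately show "y \<in> (\<lambda>i. c [^] i) ` I" using yi I_def by auto
  qed
  have injI: "inj_on (\<lambda>i. i * M div r) I"
  proof
    fix i j assume ij: "i \<in> I" "j \<in> I" "i * M div r = j * M div r"
    have "i * M = (i * M div r) * r" using ij(1) by (simp add: I_def)
    also have "\<dots> = (j * M div r) * r" using ij(3) by simp
    also have "\<dots> = j * M" using ij(2) by (simp add: I_def)
    finally show "i = j" using M by simp
  qed
  have imgI: "(\<lambda>i. i * M div r) ` I \<subseteq> {..<M}"
  proof
    fix z assume "z \<in> (\<lambda>i. i * M div r) ` I"
    then obtain i where i: "i \<in> I" "z = i * M div r" by auto
    have "i * M < r * M" using i M by (simp add: I_def)
    then have "i * M div r < M" using r1 by (simp add: div_less_iff_less_mult mult.commute)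
    then show "z \<in> {..<M}" using i by simp
  qed
  have "card {y\<in>carrier G. y [^] M = \<one>} \<le> card ((\<lambda>i. c [^] i) ` I)"
    by (rule card_mono[OF _ sub]) (simp add: I_def)
  also have "\<dots> \<le> card I" by (rule card_image_le) (simp add: I_def)
  also have "\<dots> \<le> card {..<M}" using card_inj_on_le[OF injI imgI] by simp
  finally show ?thesis by simp
qed




lemma restr_facts:
  assumes D: "subgroup D S_inf"
  shows "group (S_inf\<lparr>carrier := D\<rparr>)"
    and "\<And>g. g \<in> D \<Longrightarrow> finitary_perm g"
    and "\<And>g h. g \<in> D \<Longrightarrow> h \<in> D \<Longrightarrow> g \<otimes>\<^bsub>S_inf\<lparr>carrier := D\<rparr>\<^esub> h = g \<circ> h"
    and "\<one>\<^bsub>S_inf\<lparr>carrier := D\<rparr>\<^esub> = id"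
    and "\<And>g n. g \<in> D \<Longrightarrow> g [^]\<^bsub>S_inf\<lparr>carrier := D\<rparr>\<^esub> (n::nat) = g ^^ n"
proof -
  show grp: "group (S_inf\<lparr>carrier := D\<rparr>)" by (rule subgroup.subgroup_is_group[OF D group_S_inf])
  show fin: "\<And>g. g \<in> D \<Longrightarrow> finitary_perm g" using subgroup.subset[OF D] carrier_S_inf by auto
  show mul: "\<And>g h. g \<in> D \<Longrightarrow> h \<in> D \<Longrightarrow> g \<otimes>\<^bsub>S_inf\<lparr>carrier := D\<rparr>\<^esub> h = g \<circ> h"
    using fin by (simp add: mult_S_inf carrier_S_inf)
  show one: "\<one>\<^bsub>S_inf\<lparr>carrier := D\<rparr>\<^esub> = id" by (simp add: one_S_inf)
  fix g and n :: nat assume g: "g \<in> D"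
  show "g [^]\<^bsub>S_inf\<lparr>carrier := D\<rparr>\<^esub> n = g ^^ n"
  proof (induction n)
    case 0 then show ?case using one by simp
  next
    case (Suc n)
    have cl: "g [^]\<^bsub>S_inf\<lparr>carrier := D\<rparr>\<^esub> n \<in> D"
      using monoid.nat_pow_closed[OF group.is_monoid[OF grp], of g n] g by simp
    have "g [^]\<^bsub>S_inf\<lparr>carrier := D\<rparr>\<^esub> Suc n = g [^]\<^bsub>S_inf\<lparr>carrier := D\<rparr>\<^esub> n \<otimes>\<^bsub>S_inf\<lparr>carrier := D\<rparr>\<^esub> g"
      by (rule monoid.nat_pow_Suc[OF group.is_monoid[OF grp]])
    also have "\<dots> = (g ^^ n) \<circ> g" using mul[OF cl g] Suc by simp
    finally show ?case by (metis funpow_Suc_right)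
  qed
qed

theorem mainTheorem11:
  shows "\<forall>\<sigma> \<in> carrier S_inf. \<exists>b::nat. \<forall>D.
           subgroup D S_inf \<and> finite D \<and> metacyclic (S_inf\<lparr>carrier := D\<rparr>) \<longrightarrow>
           card {g \<in> D. cycle_structure g = cycle_structure \<sigma>} \<le> b"
proof
  fix \<sigma> assume "\<sigma> \<in> carrier S_inf"
  define s where "s = sum_list (cycle_structure \<sigma>)"
  define M :: nat where "M = fact s"
  define t where "t = 2 * s"
  define C :: nat where "C = (t*t+1)^(t*t)"
  show "\<exists>b::nat. \<forall>D. subgroup D S_inf \<and> finite D \<and> metacyclic (S_inf\<lparr>carrier := D\<rparr>) \<longrightarrow>
           card {g \<in> D. cycle_structure g = cycle_structure \<sigma>} \<le> b"
  proof (intro exI[of _ "M * C"] allI impI)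
    fix D assume asm: "subgroup D S_inf \<and> finite D \<and> metacyclic (S_inf\<lparr>carrier := D\<rparr>)"
    then have Dsub: "subgroup D S_inf" and Dfin: "finite D" and meta: "metacyclic (S_inf\<lparr>carrier := D\<rparr>)"
      by auto
    define G where "G = S_inf\<lparr>carrier := D\<rparr>"
    note RF = restr_facts[OF Dsub, folded G_def]
    interpret G: group G by (rule RF(1))
    have carG: "carrier G = D" by (simp add: G_def)
    have fin: "finitary_perm g" if "g \<in> D" for g using RF(2) that .
    have finsupp: "finite (supp g)" "inj g" if "g \<in> D" for g
      using fin[OF that] by (auto simp: finitary_perm_def supp_def bij_def)
    obtain N where N: "N \<lhd> G" "cyclic_group (subgroup_generated G N)" "cyclic_group (G Mod N)"
      using meta unfolding metacyclic_def G_def by blast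
    have Nsub: "subgroup N G" using N(1) by (rule normal_imp_subgroup)
    have ND: "N \<subseteq> D" using subgroup.subset[OF Nsub] carG by simp
    interpret N: normal N G by (rule N(1))
    define H where "H = subgroup_generated G N"
    interpret H: group H unfolding H_def by simp
    have carH: "carrier H = N" unfolding H_def by (rule subgroup.carrier_subgroup_generated_subgroup[OF Nsub])
    obtain a where a: "a \<in> carrier H" "subgroup_generated H {a} = H"
      using N(2) unfolding cyclic_group_def H_def by blast
    have "carrier H = generate H {a}"
      using arg_cong[OF a(2), of carrier] a(1) by (simp add: carrier_subgroup_generated)
    also have "\<dots> = {a [^]\<^bsub>H\<^esub> k | k. k \<in> (UNIV :: nat set)}"
      by (rule H.generate_pow_on_finite_carrier) (use carH ND Dfin a(1) in \<open>auto intro: finite_subset\<close>)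
    finally have Npow0: "N = {a [^]\<^bsub>H\<^esub> k | k. k \<in> (UNIV :: nat set)}" using carH by simp
    have aD: "a \<in> D" using a(1) carH ND by auto
    have "a [^]\<^bsub>H\<^esub> k = a ^^ k" for k :: nat
      unfolding H_def pow_subgroup_generated using RF(5)[OF aD] .
    then have Npow: "N = {a ^^ k | k. k \<in> (UNIV :: nat set)}" using Npow0 by simp
    have ainj: "inj a" using finsupp[OF aD] by simp
    have aper: "\<forall>x. \<exists>d>0. (a^^d) x = x"
    proof
      fix x
      have "a ^^ fact (card (supp a)) = id" using order_bound[OF ainj finsupp(1)[OF aD] order_refl] .
      then show "\<exists>d>0. (a^^d) x = x" by (intro exI[of _ "fact (card (supp a))"]) auto
    qed
    define B where "B = {n\<in>N. card (supp n) \<le> t}"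
    have cardB: "card B \<le> C" unfolding C_def
    proof (rule cyclic_supp_bound[OF ainj aper])
      show "\<forall>n\<in>B. (\<exists>k. n = a ^^ k) \<and> finite (supp n) \<and> card (supp n) \<le> t"
        using Npow finsupp ND unfolding B_def by blast
    qed
    define Q where "Q = G Mod N"
    interpret Q: group Q unfolding Q_def by (rule N.factorgroup_is_group)
    have finQ: "finite (carrier Q)" unfolding Q_def carrier_FactGroup using carG Dfin by simp
    define Y where "Y = {y\<in>carrier Q. y [^]\<^bsub>Q\<^esub> M = \<one>\<^bsub>Q\<^esub>}"
    have cardY: "card Y \<le> M" unfolding Y_def
      by (rule Q.cyclic_count[OF finQ]) (use N(3) in \<open>simp_all add: Q_def M_def\<close>)
    define E where "E = {g \<in> D. cycle_structure g = cycle_structure \<sigma>}"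
    have Es: "card (supp g) \<le> s" if "g \<in> E" for g
      using supp_le_cs[OF fin[of g]] that by (simp add: E_def s_def)
    define f where "f g = N #>\<^bsub>G\<^esub> g" for g
    have fE: "f ` E \<subseteq> Y"
    proof
      fix y assume "y \<in> f ` E"
      then obtain g where g: "g \<in> E" "y = f g" by auto
      have gD: "g \<in> D" using g E_def by simp
      have "g ^^ M = id" unfolding M_def using order_bound[OF finsupp(2)[OF gD] finsupp(1)[OF gD] Es[OF g(1)]] .
      then have gM: "g [^]\<^bsub>G\<^esub> M = \<one>\<^bsub>G\<^esub>" using RF(4,5) gD by simp
      have "y [^]\<^bsub>Q\<^esub> M = N #>\<^bsub>G\<^esub> (g [^]\<^bsub>G\<^esub> M)"
        unfolding g(2) f_def Q_def by (rule N.FactGroup_pow) (use gD carG in simp)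
      also have "\<dots> = N" using gM ND carG by simp
      finally have "y [^]\<^bsub>Q\<^esub> M = \<one>\<^bsub>Q\<^esub>" by (simp add: Q_def)
      moreover have "y \<in> carrier Q" using g gD carG unfolding Q_def f_def carrier_FactGroup E_def by auto
      ultimately show "y \<in> Y" by (simp add: Y_def)
    qed
    have fiber: "card {g\<in>E. f g = y} \<le> C" if y: "y \<in> f ` E" for y
    proof -
      obtain g0 where g0: "g0 \<in> E" "f g0 = y" using y by auto
      have g0D: "g0 \<in> D" using g0 E_def by simp
      define h where "h g = g \<otimes>\<^bsub>G\<^esub> inv\<^bsub>G\<^esub> g0" for g
      have ig0D: "inv\<^bsub>G\<^esub> g0 \<in> D" using g0D carG by auto
      have suppinv: "supp (inv\<^bsub>G\<^esub> g0) \<subseteq> supp g0"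
      proof
        fix x assume x: "x \<in> supp (inv\<^bsub>G\<^esub> g0)"
        have "g0 \<otimes>\<^bsub>G\<^esub> inv\<^bsub>G\<^esub> g0 = id" using g0D carG RF(4) by simp
        then have "g0 ((inv\<^bsub>G\<^esub> g0) x) = x" using RF(3)[OF g0D ig0D] by (metis comp_apply id_apply)
        then show "x \<in> supp g0" using x finsupp(2)[OF g0D] unfolding supp_def by (metis (mono_tags, lifting) injD mem_Collect_eq)
      qed
      have injh: "inj_on h {g\<in>E. f g = y}"
        by (rule inj_onI) (use ig0D carG in \<open>auto simp: h_def E_def\<close>)
      have himg: "h ` {g\<in>E. f g = y} \<subseteq> B"
      proof
        fix z assume "z \<in> h ` {g\<in>E. f g = y}"
        then obtain g where g: "g \<in> E" "f g = y" "z = h g" by auto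
        have gD: "g \<in> D" using g E_def by simp
        have "g \<in> N #>\<^bsub>G\<^esub> g" by (rule G.rcos_self) (use gD carG Nsub in auto)
        then have "g \<in> N #>\<^bsub>G\<^esub> g0" using g(2) g0(2) by (simp add: f_def)
        then obtain n where n: "n \<in> N" "g = n \<otimes>\<^bsub>G\<^esub> g0" unfolding r_coset_def by auto
        have nD: "n \<in> D" using n ND by auto
        have "n \<in> carrier G" "g0 \<in> carrier G" using nD g0D carG by auto
        then have zN: "z = n" using n g(3) by (simp add: h_def G.m_assoc)
        have "supp z \<subseteq> supp g \<union> supp g0"
        proof
          fix x assume x: "x \<in> supp z"
          show "x \<in> supp g \<union> supp g0"
          proof (rule ccontr)
            assume "x \<notin> supp g \<union> supp g0"
            then have "g x = x" "g0 x = x" by (auto simp: supp_def)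
            moreover have "(inv\<^bsub>G\<^esub> g0) x = x" using suppinv \<open>g0 x = x\<close> by (auto simp: supp_def)
            ultimately have "z x = x" using g(3) RF(3)[OF gD ig0D] by (simp add: h_def)
            then show False using x by (simp add: supp_def)
          qed
        qed
        then have "card (supp z) \<le> card (supp g \<union> supp g0)"
          using finsupp(1)[OF gD] finsupp(1)[OF g0D] by (simp add: card_mono)
        also have "\<dots> \<le> card (supp g) + card (supp g0)" by (rule card_Un_le)
        also have "\<dots> \<le> t" using Es[OF g(1)] Es[OF g0(1)] by (simp add: t_def)
        finally show "z \<in> B" using zN n(1) by (simp add: B_def)
      qed
      have "card {g\<in>E. f g = y} \<le> card B"
      proof -
        have "B \<subseteq> D" using ND by (auto simp: B_def)
        then have "finite B" using Dfin by (rule finite_subset)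
        then show ?thesis using card_inj_on_le[OF injh himg] by simp
      qed
      then show ?thesis using cardB by simp
    qed
    have finE: "finite E" using Dfin by (simp add: E_def)
    have "E = (\<Union>y\<in>f ` E. {g\<in>E. f g = y})" by auto
    then have "card E = card (\<Union>y\<in>f ` E. {g\<in>E. f g = y})" by simp
    also have "\<dots> \<le> (\<Sum>y\<in>f ` E. card {g\<in>E. f g = y})"
      by (rule card_UN_le) (use finE in simp)
    also have "\<dots> \<le> card (f ` E) * C"
      using sum_bounded_above[of "f ` E" "\<lambda>y. card {g\<in>E. f g = y}" C] fiber by simp
    also have "\<dots> \<le> M * C"
    proof -
      have "card (f ` E) \<le> card Y" by (rule card_mono) (use fE Y_def finQ in auto)
      then show ?thesis using cardY by simp
    qed
    finally show "card {g \<in> D. cycle_structure g = cycle_structure \<sigma>} \<le> M * C" by (simp add: E_def)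
  qed
qed


end
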